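(* Let $\mathbb{K}$ be a countable set, $m\ge2$ an even integer, $q=m/2$, $\mathcal{X}$ a nonempty set, and $(\phi_k)_{k\in\mathbb{K}}$ measurable functions $\phi_k\colon\mathcal{X}\to\mathbb{C}$ with $(\phi_k(x))_{k\in\mathbb{K}}\in\ell^m(\mathbb{K};\mathbb{C})$ for every $x\in\mathcal{X}$. Set $\Phi(x)=(\overline{\phi_k(x)})_{k\in\mathbb{K}}$. Then the function $$K\colon\mathcal{X}^q\times\mathcal{X}^q\to\mathbb{C},\quad K(x'_1,\dots,x'_q;x''_1,\dots,x''_q)=\sum_{k\in\mathbb{K}}\phi_k(x'_1)\cdots\phi_k(x'_q)\overline{\phi_k(x''_1)}\cdots\overline{\phi_k(x''_q)}$$ is well-defined, and: (i) for all $(x'_1,\dots,x'_q;x''_1,\dots,x''_q)\in\mathcal{X}^q\times\mathcal{X}^q$ and all permutations $\sigma',\sigma''$ of $\{1,\dots,q\}$, $K(x'_{\sigma'(1)},\dots,x'_{\sigma'(q)};x''_{\sigma''(1)},\dots,x''_{\sigma''(q)})=K(x'_1,\dots,x'_q;x''_1,\dots,x''_q)$; (ii) for all $(x';x'')\in\mathcal{X}^q\times\mathcal{X}^q$, $K(x';x'')=\overline{K(x'';x')}$; (iii) for every $(x_i)_{1\le i\le n}\in\mathcal{X}^n$ and every $u\in\mathbb{C}^n$, $\sum_{i_1,\dots,i_q=1}^n\sum_{j_1,\dots,j_q=1}^nK(x_{j_1},\dots,x_{j_q};x_{i_1},\dots,x_{i_q})u_{i_1}\cdots u_{i_q}\overline{u_{j_1}}\cdots\overline{u_{j_q}}\ge0$;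 (iv) for every $(x_i)_{1\le i\le n}\in\mathcal{X}^n$, the map $u\in\mathbb{C}^n\mapsto\big\|\sum_{i=1}^nu_i\Phi(x_i)\big\|_m^m=\sum_{i_1,\dots,i_q=1}^n\sum_{j_1,\dots,j_q=1}^nK(x_{j_1},\dots,x_{j_q};x_{i_1},\dots,x_{i_q})u_{i_1}\cdots u_{i_q}\overline{u_{j_1}}\cdots\overline{u_{j_q}}$ (the equality holding) is a positive homogeneous polynomial form of degree $m$ on $\mathbb{C}^n$; (v) for every $(x'_1,\dots,x'_q)\in\mathcal{X}^q$, $K(x'_1,\dots,x'_q;x'_1,\dots,x'_q)\ge0$; (vi) for every $(x'_1,\dots,x'_q;x''_1,\dots,x''_q)\in\mathcal{X}^q\times\mathcal{X}^q$, $$|K(x'_1,\dots,x'_q;x''_1,\dots,x''_q)|\le\prod_{s=1}^qK(x'_s,\dots,x'_s;x'_s,\dots,x'_s)^{1/m}\prod_{s=1}^qK(x''_s,\dots,x''_s;x''_s,\dots,x''_s)^{1/m}.$$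
   Context: $\ell^m(\mathbb{K};\mathbb{C})$ is the space of complex families $(w_k)_{k\in\mathbb{K}}$ with $\|w\|_m=(\sum_k|w_k|^m)^{1/m}<\infty$. In $K(z,\dots,z;z,\dots,z)$ all $2q$ arguments equal $z$. *)

theory Defs
  imports "HOL-Analysis.Analysis" "HOL-Library.Complex_Order"
begin

text \<open>The kernel K. Arguments are q-tuples represented as functions nat => 'x,
  indexed by 0..q-1 (instead of 1..q).\<close>
definition Kker :: "('k \<Rightarrow> 'x \<Rightarrow> complex) \<Rightarrow> 'k set \<Rightarrow> nat \<Rightarrow> (nat \<Rightarrow> 'x) \<Rightarrow> (nat \<Rightarrow> 'x) \<Rightarrow> complex" where
  "Kker \<phi> KK q x' x'' =
     (\<Sum>\<^sub>\<infinity>k\<in>KK. (\<Prod>s<q. \<phi> k (x' s)) * (\<Prod>s<q. cnj (\<phi> k (x'' s))))"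

text \<open>A real-valued function on C^n (vectors u :: nat => complex, only u 0..u (n-1) used)
  is a homogeneous polynomial form of degree d if it is a polynomial in u and conj u
  all of whose monomials have total degree d.\<close>
definition hom_poly_form :: "nat \<Rightarrow> nat \<Rightarrow> ((nat \<Rightarrow> complex) \<Rightarrow> real) \<Rightarrow> bool" where
  "hom_poly_form n d f \<longleftrightarrow>
     (\<exists>c :: (nat \<Rightarrow> nat) \<Rightarrow> (nat \<Rightarrow> nat) \<Rightarrow> complex. \<forall>u.
        complex_of_real (f u) =
          (\<Sum>(a, b) \<in> {(a, b). a \<in> {..<n} \<rightarrow>\<^sub>E {..d} \<and> b \<in> {..<n} \<rightarrow>\<^sub>E {..d} \<and>
                                   sum a {..<n} + sum b {..<n} = d}.
             c a b * (\<Prod>i<n. u i ^ a i * cnj (u i) ^ b i)))"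

definition pos_hom_poly_form :: "nat \<Rightarrow> nat \<Rightarrow> ((nat \<Rightarrow> complex) \<Rightarrow> real) \<Rightarrow> bool" where
  "pos_hom_poly_form n d f \<longleftrightarrow> hom_poly_form n d f \<and> (\<forall>u. f u \<ge> 0)"

end

theory Submission
  imports Defs
begin



lemma summable_on_finsum:
  fixes f :: "'i \<Rightarrow> 'a \<Rightarrow> 'b::{topological_comm_monoid_add}"
  assumes "finite I" "\<And>i. i \<in> I \<Longrightarrow> f i summable_on A"
  shows "(\<lambda>x. \<Sum>i\<in>I. f i x) summable_on A"
  using assms by (induction I rule: finite_induct) (auto intro!: summable_on_add)

lemma infsum_finsum:
  fixes f :: "'i \<Rightarrow> 'a \<Rightarrow> 'b::{topological_comm_monoid_add, t2_space}"
  assumes "finite I" "\<And>i. i \<in> I \<Longrightarrow> f i summable_on A"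
  shows "(\<Sum>\<^sub>\<infinity>x\<in>A. \<Sum>i\<in>I. f i x) = (\<Sum>i\<in>I. \<Sum>\<^sub>\<infinity>x\<in>A. f i x)"
  using assms
proof (induction I rule: finite_induct)
  case (insert i I)
  have "(\<Sum>\<^sub>\<infinity>x\<in>A. \<Sum>i\<in>insert i I. f i x) = (\<Sum>\<^sub>\<infinity>x\<in>A. f i x + (\<Sum>i\<in>I. f i x))"
    using insert by simp
  also have "\<dots> = (\<Sum>\<^sub>\<infinity>x\<in>A. f i x) + (\<Sum>\<^sub>\<infinity>x\<in>A. \<Sum>i\<in>I. f i x)"
    using insert by (intro infsum_add summable_on_finsum) auto
  finally show ?case using insert by simp
qed simp

lemma amgm:
  fixes a :: "'a \<Rightarrow> real"
  assumes "finite S" "card S = d" "d > 0" "\<And>i. i \<in> S \<Longrightarrow> a i \<ge> 0"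
  shows "(\<Prod>i\<in>S. a i) \<le> (\<Sum>i\<in>S. a i ^ d) / d"
proof -
  have ne: "S \<noteq> {}" using assms by auto
  have "(\<Prod>i\<in>S. a i ^ d) powr (1 / card S) \<le> (\<Sum>i\<in>S. a i ^ d / card S)"
    by (rule arith_geom_mean) (use assms ne in auto)
  moreover have "(\<Prod>i\<in>S. a i ^ d) = (\<Prod>i\<in>S. a i) ^ d"
    by (simp add: prod_power_distrib)
  moreover have "((\<Prod>i\<in>S. a i) ^ d) powr (1 / d) = (\<Prod>i\<in>S. a i)"
  proof -
    have p: "(\<Prod>i\<in>S. a i) \<ge> 0" using assms by (simp add: prod_nonneg)
    then have "((\<Prod>i\<in>S. a i) ^ d) powr (1 / d) = ((\<Prod>i\<in>S. a i) powr d) powr (1 / d)"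
      by (simp add: powr_realpow' assms)
    also have "\<dots> = (\<Prod>i\<in>S. a i)" using p assms by (simp add: powr_powr)
    finally show ?thesis .
  qed
  ultimately show ?thesis using assms by (simp add: sum_divide_distrib)
qed

lemma amgm2:
  fixes a b :: "nat \<Rightarrow> real"
  assumes "q > 0" "\<And>s. s < q \<Longrightarrow> a s \<ge> 0" "\<And>s. s < q \<Longrightarrow> b s \<ge> 0"
  shows "(\<Prod>s<q. a s) * (\<Prod>s<q. b s) \<le> ((\<Sum>s<q. a s ^ (2*q)) + (\<Sum>s<q. b s ^ (2*q))) / (2*q)"
proof -
  define g where "g = case_sum a b"
  have "(\<Prod>i\<in>{..<q} <+> {..<q}. g i) \<le> (\<Sum>i\<in>{..<q} <+> {..<q}. g i ^ (2*q)) / (2*q)"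
    using assms by (intro amgm) (auto simp: card_Plus g_def)
  then show ?thesis by (simp add: prod.Plus sum.Plus g_def o_def)
qed

lemma summable_on_divc:
  fixes f :: "'a \<Rightarrow> real"
  shows "f summable_on A \<Longrightarrow> (\<lambda>x. f x / c) summable_on A"
  using has_sum_divide_const summable_on_def by blast

lemma summP:
  fixes \<phi> :: "'k \<Rightarrow> 'x \<Rightarrow> complex"
  assumes q: "q > 0" and m: "m = 2*q"
    and sm: "\<forall>x\<in>X. (\<lambda>k. (cmod (\<phi> k x)) ^ m) summable_on KK"
    and x': "\<forall>s<q. x' s \<in> X" and x'': "\<forall>s<q. x'' s \<in> X"
  shows "(\<lambda>k. norm ((\<Prod>s<q. \<phi> k (x' s)) * (\<Prod>s<q. cnj (\<phi> k (x'' s))))) summable_on KK"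
proof -
  define g where "g k = ((\<Sum>s<q. cmod (\<phi> k (x' s)) ^ m) + (\<Sum>s<q. cmod (\<phi> k (x'' s)) ^ m)) / m" for k
  have "g summable_on KK"
    unfolding g_def using sm x' x''
    by (intro summable_on_divc summable_on_add summable_on_finsum) auto
  moreover have "norm ((\<Prod>s<q. \<phi> k (x' s)) * (\<Prod>s<q. cnj (\<phi> k (x'' s)))) \<le> g k" for k
  proof -
    have "norm ((\<Prod>s<q. \<phi> k (x' s)) * (\<Prod>s<q. cnj (\<phi> k (x'' s))))
        = (\<Prod>s<q. cmod (\<phi> k (x' s))) * (\<Prod>s<q. cmod (\<phi> k (x'' s)))"
      by (simp only: norm_mult prod_norm[symmetric] complex_mod_cnj)
    also have "\<dots> \<le> g k" unfolding g_def m
      by (rule amgm2) (use q in auto)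
    finally show ?thesis .
  qed
  ultimately show ?thesis
    by (rule summable_on_comparison_test[of g]) auto
qed

lemma vpow:
  fixes w :: "nat \<Rightarrow> complex"
  shows "(\<Sum>i<n. w i) ^ q = (\<Sum>f \<in> {..<q} \<rightarrow>\<^sub>E {..<n}. \<Prod>s<q. w (f s))"
proof -
  have "(\<Sum>i<n. w i) ^ q = (\<Prod>s<q. \<Sum>i<n. w i)" by simp
  also have "\<dots> = (\<Sum>f \<in> {..<q} \<rightarrow>\<^sub>E {..<n}. \<Prod>s<q. w (f s))"
    by (rule prod_sum_PiE) auto
  finally show ?thesis .
qed

lemma ident_pt:
  fixes \<phi> :: "'k \<Rightarrow> 'x \<Rightarrow> complex" and u :: "nat \<Rightarrow> complex"
  assumes m: "m = 2*q"
  shows "complex_of_real (cmod (\<Sum>i<n. u i * cnj (\<phi> k (x i))) ^ m) =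
    (\<Sum>i\<in>{..<q} \<rightarrow>\<^sub>E {..<n}. \<Sum>j\<in>{..<q} \<rightarrow>\<^sub>E {..<n}.
       ((\<Prod>s<q. \<phi> k (x (j s))) * (\<Prod>s<q. cnj (\<phi> k (x (i s))))) *
       ((\<Prod>s<q. u (i s)) * (\<Prod>s<q. cnj (u (j s)))))"
proof -
  define v where "v = (\<Sum>i<n. u i * cnj (\<phi> k (x i)))"
  have cv: "cnj v = (\<Sum>i<n. cnj (u i) * \<phi> k (x i))" unfolding v_def by simp
  have "complex_of_real (cmod v ^ m) = complex_of_real ((cmod v)\<^sup>2) ^ q"
    unfolding m by (simp only: power_mult of_real_power)
  also have "\<dots> = v ^ q * cnj v ^ q" by (subst complex_norm_square) (rule power_mult_distrib)
  also have "\<dots> = (\<Sum>i\<in>{..<q} \<rightarrow>\<^sub>E {..<n}. (\<Prod>s<q. u (i s)) * (\<Prod>s<q. cnj (\<phi> k (x (i s))))) *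
                  (\<Sum>j\<in>{..<q} \<rightarrow>\<^sub>E {..<n}. (\<Prod>s<q. cnj (u (j s))) * (\<Prod>s<q. \<phi> k (x (j s))))"
  proof -
    have 1: "v ^ q = (\<Sum>i\<in>{..<q} \<rightarrow>\<^sub>E {..<n}. (\<Prod>s<q. u (i s)) * (\<Prod>s<q. cnj (\<phi> k (x (i s)))))"
      unfolding v_def vpow by (simp only: prod.distrib)
    have 2: "cnj v ^ q = (\<Sum>j\<in>{..<q} \<rightarrow>\<^sub>E {..<n}. (\<Prod>s<q. cnj (u (j s))) * (\<Prod>s<q. \<phi> k (x (j s))))"
      unfolding cv vpow by (simp only: prod.distrib)
    show ?thesis unfolding 1 2 ..
  qed
  also have "\<dots> = (\<Sum>i\<in>{..<q} \<rightarrow>\<^sub>E {..<n}. \<Sum>j\<in>{..<q} \<rightarrow>\<^sub>E {..<n}.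
       ((\<Prod>s<q. \<phi> k (x (j s))) * (\<Prod>s<q. cnj (\<phi> k (x (i s))))) *
       ((\<Prod>s<q. u (i s)) * (\<Prod>s<q. cnj (u (j s)))))"
    unfolding sum_product by (intro sum.cong refl) (simp only: ac_simps)
  finally show ?thesis unfolding v_def .
qed

definition cnt :: "nat \<Rightarrow> nat \<Rightarrow> (nat \<Rightarrow> nat) \<Rightarrow> nat \<Rightarrow> nat" where
  "cnt q n i = restrict (\<lambda>l. card {s\<in>{..<q}. i s = l}) {..<n}"

lemma prod_count:
  fixes w :: "nat \<Rightarrow> 'a::comm_monoid_mult"
  assumes "i \<in> {..<q} \<rightarrow>\<^sub>E {..<n}"
  shows "(\<Prod>s<q. w (i s)) = (\<Prod>l<n. w l ^ cnt q n i l)"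
proof -
  have "(\<Prod>s<q. w (i s)) = (\<Prod>l<n. \<Prod>s\<in>{s\<in>{..<q}. i s = l}. w (i s))"
    by (rule prod.group[symmetric]) (use assms in auto)
  also have "\<dots> = (\<Prod>l<n. w l ^ cnt q n i l)"
    by (rule prod.cong) (auto simp: cnt_def)
  finally show ?thesis .
qed

lemma sum_count:
  assumes "i \<in> {..<q} \<rightarrow>\<^sub>E {..<n}"
  shows "sum (cnt q n i) {..<n} = q"
proof -
  have "sum (cnt q n i) {..<n} = (\<Sum>l<n. \<Sum>s\<in>{s\<in>{..<q}. i s = l}. (1::nat))"
    by (rule sum.cong) (auto simp: cnt_def)
  also have "\<dots> = (\<Sum>s<q. (1::nat))"
    by (rule sum.group) (use assms in auto)
  finally show ?thesis by simp
qed

lemma cnt_in: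
  assumes "i \<in> {..<q} \<rightarrow>\<^sub>E {..<n}" "q \<le> d"
  shows "cnt q n i \<in> {..<n} \<rightarrow>\<^sub>E {..d}"
proof -
  have "card {s\<in>{..<q}. i s = l} \<le> q" for l
    by (metis (no_types, lifting) card_lessThan card_mono finite_lessThan mem_Collect_eq subsetI)
  then show ?thesis using assms unfolding cnt_def by (auto intro: order_trans)
qed




lemma hom_poly_from:
  fixes f :: "(nat \<Rightarrow> complex) \<Rightarrow> real" and C :: "(nat \<Rightarrow> nat) \<Rightarrow> (nat \<Rightarrow> nat) \<Rightarrow> complex"
  assumes eq: "\<And>u. complex_of_real (f u) = (\<Sum>i\<in>{..<q} \<rightarrow>\<^sub>E {..<n}. \<Sum>j\<in>{..<q} \<rightarrow>\<^sub>E {..<n}.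
                 C i j * (\<Prod>s<q. u (i s)) * (\<Prod>s<q. cnj (u (j s))))"
  shows "hom_poly_form n (2*q) f"
proof -
  define A where "A = {..<q} \<rightarrow>\<^sub>E {..<n}"
  define S where "S = {(a, b). a \<in> {..<n} \<rightarrow>\<^sub>E {..2*q} \<and> b \<in> {..<n} \<rightarrow>\<^sub>E {..2*q} \<and>
                                   sum a {..<n} + sum b {..<n} = 2*q}"
  define g where "g p = (cnt q n (fst p), cnt q n (snd p))" for p
  define mono where "mono u ab = (\<Prod>i<n. u i ^ fst ab i * cnj (u i) ^ snd ab i)" for u :: "nat \<Rightarrow> complex" and ab
  define c where "c a b = (\<Sum>p\<in>{p. p \<in> A \<times> A \<and> g p = (a, b)}. C (fst p) (snd p))" for a b
  have finA: "finite A" unfolding A_def by (simp add: finite_PiE)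
  have finS: "finite S"
  proof (rule finite_subset)
    show "S \<subseteq> ({..<n} \<rightarrow>\<^sub>E {..2*q}) \<times> ({..<n} \<rightarrow>\<^sub>E {..2*q})"
    proof
      fix p assume "p \<in> S"
      then show "p \<in> ({..<n} \<rightarrow>\<^sub>E {..2*q}) \<times> ({..<n} \<rightarrow>\<^sub>E {..2*q})"
        unfolding S_def by (cases p) simp
    qed
    show "finite (({..<n} \<rightarrow>\<^sub>E {..2*q}) \<times> ({..<n} \<rightarrow>\<^sub>E {..2*q}))"
      by (intro finite_cartesian_product finite_PiE) auto
  qed
  have gS: "g ` (A \<times> A) \<subseteq> S"
  proof (rule image_subsetI)
    fix p assume "p \<in> A \<times> A"
    then obtain i j where p: "p = (i, j)" and ij: "i \<in> A" "j \<in> A" by blast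
    have i': "i \<in> {..<q} \<rightarrow>\<^sub>E {..<n}" and j': "j \<in> {..<q} \<rightarrow>\<^sub>E {..<n}"
      using ij unfolding A_def by auto
    have "cnt q n i \<in> {..<n} \<rightarrow>\<^sub>E {..2*q}" "cnt q n j \<in> {..<n} \<rightarrow>\<^sub>E {..2*q}"
      using cnt_in[OF i', of "2*q"] cnt_in[OF j', of "2*q"] by simp_all
    moreover have "sum (cnt q n i) {..<n} = q" "sum (cnt q n j) {..<n} = q"
      using sum_count[OF i'] sum_count[OF j'] by simp_all
    ultimately show "g p \<in> S" unfolding p g_def S_def by simp
  qed
  have mono_g: "mono u (g (i, j)) = (\<Prod>s<q. u (i s)) * (\<Prod>s<q. cnj (u (j s)))"
    if "i \<in> A" "j \<in> A" for u i j
  proof -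
    have 1: "(\<Prod>s<q. u (i s)) = (\<Prod>l<n. u l ^ cnt q n i l)"
      using that(1) unfolding A_def by (rule prod_count)
    have 2: "(\<Prod>s<q. cnj (u (j s))) = (\<Prod>l<n. cnj (u l) ^ cnt q n j l)"
      using that(2) unfolding A_def by (rule prod_count)
    show ?thesis unfolding 1 2 mono_def g_def fst_conv snd_conv by (rule prod.distrib)
  qed
  have "\<forall>u. complex_of_real (f u) = (\<Sum>(a, b)\<in>S. c a b * mono u (a, b))"
  proof
    fix u
    have "(\<Sum>(a, b)\<in>S. c a b * mono u (a, b)) =
          (\<Sum>y\<in>S. \<Sum>p\<in>{p. p \<in> A \<times> A \<and> g p = y}. C (fst p) (snd p) * mono u (g p))"
      by (rule sum.cong) (auto simp: c_def sum_distrib_right)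
    also have "\<dots> = (\<Sum>p\<in>A \<times> A. C (fst p) (snd p) * mono u (g p))"
      by (rule sum.group) (use finA finS gS in auto)
    also have "\<dots> = (\<Sum>i\<in>A. \<Sum>j\<in>A. C i j * mono u (g (i, j)))"
      by (simp add: sum.cartesian_product case_prod_beta')
    also have "\<dots> = (\<Sum>i\<in>A. \<Sum>j\<in>A. C i j * (\<Prod>s<q. u (i s)) * (\<Prod>s<q. cnj (u (j s))))"
      by (intro sum.cong refl) (simp add: mono_g mult.assoc)
    finally show "complex_of_real (f u) = (\<Sum>(a, b)\<in>S. c a b * mono u (a, b))"
      using eq A_def by simp
  qed
  then have "\<forall>u. complex_of_real (f u) = (\<Sum>(a, b)\<in>S. c a b * (\<Prod>i<n. u i ^ a i * cnj (u i) ^ b i))"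
    unfolding mono_def by simp
  then show ?thesis unfolding hom_poly_form_def S_def by blast
qed




lemma powr_inv_pow:
  fixes x :: real
  assumes "x > 0" "m > 0"
  shows "(x powr (1 / real m)) ^ m = x"
proof -
  have "(x powr (1 / real m)) ^ m = (x powr (1 / real m)) powr (real m)"
    using assms by (simp add: powr_realpow)
  also have "\<dots> = x powr (1 / real m * real m)" by (rule powr_powr)
  also have "\<dots> = x" using assms by simp
  finally show ?thesis .
qed

lemma holderK:
  fixes a b :: "nat \<Rightarrow> 'k \<Rightarrow> real"
  assumes q: "q > 0" and m: "m = 2*q"
    and nna: "\<And>s k. s < q \<Longrightarrow> k \<in> KK \<Longrightarrow> a s k \<ge> 0"
    and nnb: "\<And>s k. s < q \<Longrightarrow> k \<in> KK \<Longrightarrow> b s k \<ge> 0"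
    and sa: "\<And>s. s < q \<Longrightarrow> (\<lambda>k. a s k ^ m) summable_on KK"
    and sb: "\<And>s. s < q \<Longrightarrow> (\<lambda>k. b s k ^ m) summable_on KK"
    and sab: "(\<lambda>k. (\<Prod>s<q. a s k) * (\<Prod>s<q. b s k)) summable_on KK"
  shows "(\<Sum>\<^sub>\<infinity>k\<in>KK. (\<Prod>s<q. a s k) * (\<Prod>s<q. b s k)) \<le>
    (\<Prod>s<q. (\<Sum>\<^sub>\<infinity>k\<in>KK. a s k ^ m) powr (1 / real m)) * (\<Prod>s<q. (\<Sum>\<^sub>\<infinity>k\<in>KK. b s k ^ m) powr (1 / real m))"
proof -
  define Na where "Na s = (\<Sum>\<^sub>\<infinity>k\<in>KK. a s k ^ m)" for s
  define Nb where "Nb s = (\<Sum>\<^sub>\<infinity>k\<in>KK. b s k ^ m)" for s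
  have Na0: "Na s \<ge> 0" if "s < q" for s
    unfolding Na_def using nna that by (intro infsum_nonneg) simp
  have Nb0: "Nb s \<ge> 0" if "s < q" for s
    unfolding Nb_def using nnb that by (intro infsum_nonneg) simp
  have rhs0: "(\<Prod>s<q. Na s powr (1 / real m)) * (\<Prod>s<q. Nb s powr (1 / real m)) \<ge> 0"
    by (intro mult_nonneg_nonneg prod_nonneg) auto
  show ?thesis
  proof (cases "\<exists>s<q. Na s = 0 \<or> Nb s = 0")
    case True
    then obtain s0 where s0: "s0 < q" "Na s0 = 0 \<or> Nb s0 = 0" by blast
    have z: "(\<Prod>s<q. a s k) * (\<Prod>s<q. b s k) = 0" if k: "k \<in> KK" for k
    proof (cases "Na s0 = 0")
      case True
      have "a s0 k ^ m = 0"
        by (rule nonneg_infsum_le_0D[of "\<lambda>k. a s0 k ^ m" KK])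
           (use True sa[OF s0(1)] nna[OF s0(1)] k in \<open>auto simp: Na_def\<close>)
      then have "a s0 k = 0" by simp
      then have "(\<Prod>s<q. a s k) = 0" using s0(1) by (intro prod_zero) auto
      then show ?thesis by simp
    next
      case False
      then have N: "Nb s0 = 0" using s0 by blast
      have "b s0 k ^ m = 0"
        by (rule nonneg_infsum_le_0D[of "\<lambda>k. b s0 k ^ m" KK])
           (use N sb[OF s0(1)] nnb[OF s0(1)] k in \<open>auto simp: Nb_def\<close>)
      then have "b s0 k = 0" by simp
      then have "(\<Prod>s<q. b s k) = 0" using s0(1) by (intro prod_zero) auto
      then show ?thesis by simp
    qed
    have "(\<Sum>\<^sub>\<infinity>k\<in>KK. (\<Prod>s<q. a s k) * (\<Prod>s<q. b s k)) = 0"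
      using z by (simp add: infsum_0)
    then show ?thesis using rhs0 by (simp add: Na_def Nb_def)
  next
    case False
    have Napos: "Na s > 0" if "s < q" for s using False Na0[OF that] that by force
    have Nbpos: "Nb s > 0" if "s < q" for s using False Nb0[OF that] that by force
    define na where "na s = Na s powr (1 / real m)" for s
    define nb where "nb s = Nb s powr (1 / real m)" for s
    have napos: "na s > 0" if "s < q" for s using Napos[OF that] by (simp add: na_def)
    have nbpos: "nb s > 0" if "s < q" for s using Nbpos[OF that] by (simp add: nb_def)
    have nam: "na s ^ m = Na s" if "s < q" for s
      unfolding na_def by (rule powr_inv_pow) (use Napos[OF that] m q in auto)
    have nbm: "nb s ^ m = Nb s" if "s < q" for s
      unfolding nb_def by (rule powr_inv_pow) (use Nbpos[OF that] m q in auto)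
    define D where "D = (\<Prod>s<q. na s) * (\<Prod>s<q. nb s)"
    have Dpos: "D > 0" unfolding D_def using napos nbpos by (intro mult_pos_pos prod_pos) auto
    define h where "h k = (D / m) * ((\<Sum>s<q. a s k ^ m * (1 / Na s)) + (\<Sum>s<q. b s k ^ m * (1 / Nb s)))" for k
    have bound: "(\<Prod>s<q. a s k) * (\<Prod>s<q. b s k) \<le> h k" if k: "k \<in> KK" for k
    proof -
      have pa: "(\<Prod>s<q. a s k) = (\<Prod>s<q. na s) * (\<Prod>s<q. a s k / na s)"
      proof -
        have "(\<Prod>s<q. na s) > 0" using napos by (intro prod_pos) auto
        then show ?thesis using napos by (simp add: prod_dividef) (metis lessThan_iff less_irrefl)
      qed
      have pb: "(\<Prod>s<q. b s k) = (\<Prod>s<q. nb s) * (\<Prod>s<q. b s k / nb s)"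
      proof -
        have "(\<Prod>s<q. nb s) > 0" using nbpos by (intro prod_pos) auto
        then show ?thesis using nbpos by (simp add: prod_dividef) (metis lessThan_iff less_irrefl)
      qed
      have "(\<Prod>s<q. a s k / na s) * (\<Prod>s<q. b s k / nb s) \<le>
            ((\<Sum>s<q. (a s k / na s) ^ (2*q)) + (\<Sum>s<q. (b s k / nb s) ^ (2*q))) / (2*q)"
        by (rule amgm2) (use q nna nnb napos nbpos k in \<open>auto intro: divide_nonneg_pos\<close>)
      also have "\<dots> = ((\<Sum>s<q. a s k ^ m * (1 / Na s)) + (\<Sum>s<q. b s k ^ m * (1 / Nb s))) / m"
      proof -
        have "(\<Sum>s<q. (a s k / na s) ^ (2*q)) = (\<Sum>s<q. a s k ^ m * (1 / Na s))"
          by (rule sum.cong) (auto simp: power_divide nam m[symmetric])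
        moreover have "(\<Sum>s<q. (b s k / nb s) ^ (2*q)) = (\<Sum>s<q. b s k ^ m * (1 / Nb s))"
          by (rule sum.cong) (auto simp: power_divide nbm m[symmetric])
        ultimately show ?thesis using m by simp
      qed
      finally have *: "(\<Prod>s<q. a s k / na s) * (\<Prod>s<q. b s k / nb s) \<le>
            ((\<Sum>s<q. a s k ^ m * (1 / Na s)) + (\<Sum>s<q. b s k ^ m * (1 / Nb s))) / m" .
      have "(\<Prod>s<q. a s k) * (\<Prod>s<q. b s k) = D * ((\<Prod>s<q. a s k / na s) * (\<Prod>s<q. b s k / nb s))"
        unfolding D_def by (subst pa, subst pb) (simp add: ac_simps)
      also have "\<dots> \<le> D * (((\<Sum>s<q. a s k ^ m * (1 / Na s)) + (\<Sum>s<q. b s k ^ m * (1 / Nb s))) / m)"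
        using * Dpos by (intro mult_left_mono) auto
      also have "\<dots> = h k" unfolding h_def by simp
      finally show ?thesis .
    qed
    have sa': "(\<lambda>k. a s k ^ m * (1 / Na s)) summable_on KK" if "s \<in> {..<q}" for s
      using that by (intro summable_on_cmult_left sa) simp
    have sb': "(\<lambda>k. b s k ^ m * (1 / Nb s)) summable_on KK" if "s \<in> {..<q}" for s
      using that by (intro summable_on_cmult_left sb) simp
    have sF: "(\<lambda>k. \<Sum>s<q. a s k ^ m * (1 / Na s)) summable_on KK"
      by (rule summable_on_finsum[OF _ sa']) simp_all
    have sG: "(\<lambda>k. \<Sum>s<q. b s k ^ m * (1 / Nb s)) summable_on KK"
      by (rule summable_on_finsum[OF _ sb']) simp_all
    have sh: "h summable_on KK"
      unfolding h_def by (intro summable_on_cmult_right summable_on_add sF sG)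
    have iF: "(\<Sum>\<^sub>\<infinity>k\<in>KK. \<Sum>s<q. a s k ^ m * (1 / Na s)) = q"
    proof -
      have "(\<Sum>\<^sub>\<infinity>k\<in>KK. \<Sum>s<q. a s k ^ m * (1 / Na s)) = (\<Sum>s<q. \<Sum>\<^sub>\<infinity>k\<in>KK. a s k ^ m * (1 / Na s))"
        by (rule infsum_finsum[OF _ sa']) simp_all
      also have "\<dots> = (\<Sum>s<q. (1::real))"
      proof (rule sum.cong)
        fix s assume "s \<in> {..<q}"
        then show "(\<Sum>\<^sub>\<infinity>k\<in>KK. a s k ^ m * (1 / Na s)) = 1"
          using Napos[of s] by (subst infsum_cmult_left) (auto simp: Na_def[symmetric] sa)
      qed simp
      finally show ?thesis by simp
    qed
    have iG: "(\<Sum>\<^sub>\<infinity>k\<in>KK. \<Sum>s<q. b s k ^ m * (1 / Nb s)) = q"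
    proof -
      have "(\<Sum>\<^sub>\<infinity>k\<in>KK. \<Sum>s<q. b s k ^ m * (1 / Nb s)) = (\<Sum>s<q. \<Sum>\<^sub>\<infinity>k\<in>KK. b s k ^ m * (1 / Nb s))"
        by (rule infsum_finsum[OF _ sb']) simp_all
      also have "\<dots> = (\<Sum>s<q. (1::real))"
      proof (rule sum.cong)
        fix s assume "s \<in> {..<q}"
        then show "(\<Sum>\<^sub>\<infinity>k\<in>KK. b s k ^ m * (1 / Nb s)) = 1"
          using Nbpos[of s] by (subst infsum_cmult_left) (auto simp: Nb_def[symmetric] sb)
      qed simp
      finally show ?thesis by simp
    qed
    have "infsum h KK = D"
    proof -
      have "infsum h KK = (D / m) * ((\<Sum>\<^sub>\<infinity>k\<in>KK. \<Sum>s<q. a s k ^ m * (1 / Na s)) + (\<Sum>\<^sub>\<infinity>k\<in>KK. \<Sum>s<q. b s k ^ m * (1 / Nb s)))"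
        unfolding h_def by (subst infsum_cmult_right, rule summable_on_add[OF sF sG], subst infsum_add[OF sF sG], rule refl)
      also have "\<dots> = D" unfolding iF iG using m q by simp
      finally show ?thesis .
    qed
    moreover have "(\<Sum>\<^sub>\<infinity>k\<in>KK. (\<Prod>s<q. a s k) * (\<Prod>s<q. b s k)) \<le> infsum h KK"
      by (rule infsum_mono[OF sab sh bound])
    ultimately show ?thesis unfolding D_def na_def nb_def Na_def Nb_def by simp
  qed
qed




theorem proposition4p14:
  fixes M :: "'x measure" and KK :: "'k set" and \<phi> :: "'k \<Rightarrow> 'x \<Rightarrow> complex"
    and m q :: nat
  assumes "countable KK"
    and "even m" and "m \<ge> 2" and "q = m div 2"
    and "space M \<noteq> {}"
    and "\<forall>k\<in>KK. \<phi> k \<in> borel_measurable M"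
    and "\<forall>x\<in>space M. (\<lambda>k. (cmod (\<phi> k x)) ^ m) summable_on KK"
  shows
    "(\<forall>x' x''. (\<forall>s<q. x' s \<in> space M) \<and> (\<forall>s<q. x'' s \<in> space M) \<longrightarrow>
       (\<lambda>k. (\<Prod>s<q. \<phi> k (x' s)) * (\<Prod>s<q. cnj (\<phi> k (x'' s)))) summable_on KK)
  \<and> (\<forall>x' x'' \<sigma>' \<sigma>''. (\<forall>s<q. x' s \<in> space M) \<and> (\<forall>s<q. x'' s \<in> space M)
        \<and> \<sigma>' permutes {..<q} \<and> \<sigma>'' permutes {..<q} \<longrightarrow>
       Kker \<phi> KK q (x' \<circ> \<sigma>') (x'' \<circ> \<sigma>'') = Kker \<phi> KK q x' x'')
  \<and> (\<forall>x' x''. (\<forall>s<q. x' s \<in> space M) \<and> (\<forall>s<q. x'' s \<in> space M) \<longrightarrow>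
       Kker \<phi> KK q x' x'' = cnj (Kker \<phi> KK q x'' x'))
  \<and> (\<forall>n x (u :: nat \<Rightarrow> complex). (\<forall>i<n. x i \<in> space M) \<longrightarrow>
       (\<Sum>i\<in>{..<q} \<rightarrow>\<^sub>E {..<n}. \<Sum>j\<in>{..<q} \<rightarrow>\<^sub>E {..<n}.
          Kker \<phi> KK q (x \<circ> j) (x \<circ> i) * (\<Prod>s<q. u (i s)) * (\<Prod>s<q. cnj (u (j s)))) \<ge> 0)
  \<and> (\<forall>n x. (\<forall>i<n. x i \<in> space M) \<longrightarrow>
       (\<forall>u :: nat \<Rightarrow> complex.
          (\<lambda>k. (cmod (\<Sum>i<n. u i * cnj (\<phi> k (x i)))) ^ m) summable_on KK \<and>
          complex_of_real (\<Sum>\<^sub>\<infinity>k\<in>KK. (cmod (\<Sum>i<n. u i * cnj (\<phi> k (x i)))) ^ m) =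
          (\<Sum>i\<in>{..<q} \<rightarrow>\<^sub>E {..<n}. \<Sum>j\<in>{..<q} \<rightarrow>\<^sub>E {..<n}.
             Kker \<phi> KK q (x \<circ> j) (x \<circ> i) * (\<Prod>s<q. u (i s)) * (\<Prod>s<q. cnj (u (j s))))) \<and>
       pos_hom_poly_form n m
         (\<lambda>u. \<Sum>\<^sub>\<infinity>k\<in>KK. (cmod (\<Sum>i<n. u i * cnj (\<phi> k (x i)))) ^ m))
  \<and> (\<forall>x'. (\<forall>s<q. x' s \<in> space M) \<longrightarrow> Kker \<phi> KK q x' x' \<ge> 0)
  \<and> (\<forall>x' x''. (\<forall>s<q. x' s \<in> space M) \<and> (\<forall>s<q. x'' s \<in> space M) \<longrightarrow>
       cmod (Kker \<phi> KK q x' x'') \<le>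
         (\<Prod>s<q. (Re (Kker \<phi> KK q (\<lambda>_. x' s) (\<lambda>_. x' s))) powr (1 / real m)) *
         (\<Prod>s<q. (Re (Kker \<phi> KK q (\<lambda>_. x'' s) (\<lambda>_. x'' s))) powr (1 / real m)))"
proof -
  have q0: "q > 0" and m2: "m = 2*q" using assms(2,3,4) by auto
  define X where "X = space M"
  have sm: "\<forall>x\<in>X. (\<lambda>k. (cmod (\<phi> k x)) ^ m) summable_on KK" using assms(7) X_def by simp
  define P where "P x' x'' k = (\<Prod>s<q. \<phi> k (x' s)) * (\<Prod>s<q. cnj (\<phi> k (x'' s)))" for x' x'' k
  have Kdef: "Kker \<phi> KK q x' x'' = infsum (P x' x'') KK" for x' x''
    unfolding Kker_def P_def by simp
  have sP: "P x' x'' summable_on KK" if "\<forall>s<q. x' s \<in> X" "\<forall>s<q. x'' s \<in> X" for x' x''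
    unfolding P_def by (rule abs_summable_summable, rule summP[OF q0 m2 sm that])
  have P4: "(\<lambda>k. (cmod (\<Sum>i<n. u i * cnj (\<phi> k (x i)))) ^ m) summable_on KK \<and>
          complex_of_real (\<Sum>\<^sub>\<infinity>k\<in>KK. (cmod (\<Sum>i<n. u i * cnj (\<phi> k (x i)))) ^ m) =
          (\<Sum>i\<in>{..<q} \<rightarrow>\<^sub>E {..<n}. \<Sum>j\<in>{..<q} \<rightarrow>\<^sub>E {..<n}.
             Kker \<phi> KK q (x \<circ> j) (x \<circ> i) * (\<Prod>s<q. u (i s)) * (\<Prod>s<q. cnj (u (j s))))"
    if x: "\<forall>i<n. x i \<in> X" for n x and u :: "nat \<Rightarrow> complex"
  proof -
    define A where "A = {..<q} \<rightarrow>\<^sub>E {..<n}"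
    define F where "F k = (cmod (\<Sum>i<n. u i * cnj (\<phi> k (x i)))) ^ m" for k
    define U where "U i j = (\<Prod>s<q. u (i s)) * (\<Prod>s<q. cnj (u (j s)))" for i j
    have finA: "finite A" unfolding A_def by (simp add: finite_PiE)
    have inX: "\<forall>s<q. (x \<circ> i) s \<in> X" if "i \<in> A" for i
      using that x unfolding A_def by (auto simp: PiE_iff)
    have sPU: "(\<lambda>k. P (x \<circ> j) (x \<circ> i) k * U i j) summable_on KK" if "i \<in> A" "j \<in> A" for i j
      by (rule summable_on_cmult_left, rule sP) (use inX that in auto)
    have pt: "complex_of_real (F k) = (\<Sum>i\<in>A. \<Sum>j\<in>A. P (x \<circ> j) (x \<circ> i) k * U i j)" for k
      unfolding F_def A_def P_def U_def using ident_pt[OF m2, of u \<phi> k x n] by (simp add: o_def)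
    have sc: "(\<lambda>k. complex_of_real (F k)) summable_on KK"
      unfolding pt
      by (rule summable_on_finsum[OF finA], rule summable_on_finsum[OF finA], rule sPU)
    have sF: "F summable_on KK"
      using summable_on_Re[OF sc] by simp
    have "complex_of_real (infsum F KK) = (\<Sum>\<^sub>\<infinity>k\<in>KK. complex_of_real (F k))"
      by (rule infsumI[OF has_sum_of_real[OF has_sum_infsum[OF sF]], symmetric])
    also have "\<dots> = (\<Sum>\<^sub>\<infinity>k\<in>KK. \<Sum>i\<in>A. \<Sum>j\<in>A. P (x \<circ> j) (x \<circ> i) k * U i j)"
      unfolding pt ..
    also have "\<dots> = (\<Sum>i\<in>A. \<Sum>\<^sub>\<infinity>k\<in>KK. \<Sum>j\<in>A. P (x \<circ> j) (x \<circ> i) k * U i j)"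
      by (rule infsum_finsum[OF finA], rule summable_on_finsum[OF finA], rule sPU)
    also have "\<dots> = (\<Sum>i\<in>A. \<Sum>j\<in>A. \<Sum>\<^sub>\<infinity>k\<in>KK. P (x \<circ> j) (x \<circ> i) k * U i j)"
      by (rule sum.cong[OF refl], rule infsum_finsum[OF finA], rule sPU)
    also have "\<dots> = (\<Sum>i\<in>A. \<Sum>j\<in>A. Kker \<phi> KK q (x \<circ> j) (x \<circ> i) * (\<Prod>s<q. u (i s)) * (\<Prod>s<q. cnj (u (j s))))"
    proof (intro sum.cong refl)
      fix i j assume ij: "i \<in> A" "j \<in> A"
      have "(\<Sum>\<^sub>\<infinity>k\<in>KK. P (x \<circ> j) (x \<circ> i) k * U i j) = infsum (P (x \<circ> j) (x \<circ> i)) KK * U i j"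
        by (rule infsum_cmult_left, rule sP) (use inX ij in auto)
      then show "(\<Sum>\<^sub>\<infinity>k\<in>KK. P (x \<circ> j) (x \<circ> i) k * U i j) =
        Kker \<phi> KK q (x \<circ> j) (x \<circ> i) * (\<Prod>s<q. u (i s)) * (\<Prod>s<q. cnj (u (j s)))"
        by (simp add: Kdef U_def mult.assoc)
    qed
    finally show ?thesis using sF unfolding F_def A_def by simp
  qed
  have F0: "(\<Sum>\<^sub>\<infinity>k\<in>KK. (cmod (\<Sum>i<n. u i * cnj (\<phi> k (x i)))) ^ m) \<ge> 0" for n :: nat and x :: "nat \<Rightarrow> 'x" and u :: "nat \<Rightarrow> complex"
    by (rule infsum_nonneg) simp
  have part1: "\<forall>x' x''. (\<forall>s<q. x' s \<in> space M) \<and> (\<forall>s<q. x'' s \<in> space M) \<longrightarrow>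
       (\<lambda>k. (\<Prod>s<q. \<phi> k (x' s)) * (\<Prod>s<q. cnj (\<phi> k (x'' s)))) summable_on KK"
    using sP unfolding P_def X_def by blast
  have part2: "\<forall>x' x'' \<sigma>' \<sigma>''. (\<forall>s<q. x' s \<in> space M) \<and> (\<forall>s<q. x'' s \<in> space M)
        \<and> \<sigma>' permutes {..<q} \<and> \<sigma>'' permutes {..<q} \<longrightarrow>
       Kker \<phi> KK q (x' \<circ> \<sigma>') (x'' \<circ> \<sigma>'') = Kker \<phi> KK q x' x''"
  proof (intro allI impI)
    fix x' x'' :: "nat \<Rightarrow> 'x" and \<sigma>' \<sigma>'' :: "nat \<Rightarrow> nat"
    assume h: "(\<forall>s<q. x' s \<in> space M) \<and> (\<forall>s<q. x'' s \<in> space M) \<and> \<sigma>' permutes {..<q} \<and> \<sigma>'' permutes {..<q}"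
    have e1: "(\<Prod>s<q. \<phi> k ((x' \<circ> \<sigma>') s)) = (\<Prod>s<q. \<phi> k (x' s))" for k
      using prod.permute[of \<sigma>' "{..<q}" "\<lambda>s. \<phi> k (x' s)"] h by (simp add: o_def)
    have e2: "(\<Prod>s<q. cnj (\<phi> k ((x'' \<circ> \<sigma>'') s))) = (\<Prod>s<q. cnj (\<phi> k (x'' s)))" for k
      using prod.permute[of \<sigma>'' "{..<q}" "\<lambda>s. cnj (\<phi> k (x'' s))"] h by (simp add: o_def)
    show "Kker \<phi> KK q (x' \<circ> \<sigma>') (x'' \<circ> \<sigma>'') = Kker \<phi> KK q x' x''"
      unfolding Kker_def e1 e2 ..
  qed
  have part3: "\<forall>x' x''. (\<forall>s<q. x' s \<in> space M) \<and> (\<forall>s<q. x'' s \<in> space M) \<longrightarrow>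
       Kker \<phi> KK q x' x'' = cnj (Kker \<phi> KK q x'' x')"
  proof (intro allI impI)
    fix x' x'' :: "nat \<Rightarrow> 'x"
    have "cnj (Kker \<phi> KK q x'' x') = (\<Sum>\<^sub>\<infinity>k\<in>KK. cnj ((\<Prod>s<q. \<phi> k (x'' s)) * (\<Prod>s<q. cnj (\<phi> k (x' s)))))"
      unfolding Kker_def by (rule infsum_cnj[symmetric])
    also have "\<dots> = Kker \<phi> KK q x' x''"
      unfolding Kker_def by (simp add: mult.commute)
    finally show "Kker \<phi> KK q x' x'' = cnj (Kker \<phi> KK q x'' x')" by simp
  qed
  have part4: "\<forall>n x (u :: nat \<Rightarrow> complex). (\<forall>i<n. x i \<in> space M) \<longrightarrow>
       (\<Sum>i\<in>{..<q} \<rightarrow>\<^sub>E {..<n}. \<Sum>j\<in>{..<q} \<rightarrow>\<^sub>E {..<n}.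
          Kker \<phi> KK q (x \<circ> j) (x \<circ> i) * (\<Prod>s<q. u (i s)) * (\<Prod>s<q. cnj (u (j s)))) \<ge> 0"
  proof (intro allI impI)
    fix n :: nat and x :: "nat \<Rightarrow> 'x" and u :: "nat \<Rightarrow> complex" assume "\<forall>i<n. x i \<in> space M"
    then have e: "complex_of_real (\<Sum>\<^sub>\<infinity>k\<in>KK. (cmod (\<Sum>i<n. u i * cnj (\<phi> k (x i)))) ^ m) =
          (\<Sum>i\<in>{..<q} \<rightarrow>\<^sub>E {..<n}. \<Sum>j\<in>{..<q} \<rightarrow>\<^sub>E {..<n}.
             Kker \<phi> KK q (x \<circ> j) (x \<circ> i) * (\<Prod>s<q. u (i s)) * (\<Prod>s<q. cnj (u (j s))))"
      using P4[of n x u] X_def by blast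
    show "(\<Sum>i\<in>{..<q} \<rightarrow>\<^sub>E {..<n}. \<Sum>j\<in>{..<q} \<rightarrow>\<^sub>E {..<n}.
          Kker \<phi> KK q (x \<circ> j) (x \<circ> i) * (\<Prod>s<q. u (i s)) * (\<Prod>s<q. cnj (u (j s)))) \<ge> 0"
      unfolding e[symmetric] using F0[of u x n] by (simp add: less_eq_complex_def)
  qed
  have part5: "\<forall>n x. (\<forall>i<n. x i \<in> space M) \<longrightarrow>
       (\<forall>u :: nat \<Rightarrow> complex.
          (\<lambda>k. (cmod (\<Sum>i<n. u i * cnj (\<phi> k (x i)))) ^ m) summable_on KK \<and>
          complex_of_real (\<Sum>\<^sub>\<infinity>k\<in>KK. (cmod (\<Sum>i<n. u i * cnj (\<phi> k (x i)))) ^ m) =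
          (\<Sum>i\<in>{..<q} \<rightarrow>\<^sub>E {..<n}. \<Sum>j\<in>{..<q} \<rightarrow>\<^sub>E {..<n}.
             Kker \<phi> KK q (x \<circ> j) (x \<circ> i) * (\<Prod>s<q. u (i s)) * (\<Prod>s<q. cnj (u (j s))))) \<and>
       pos_hom_poly_form n m
         (\<lambda>u. \<Sum>\<^sub>\<infinity>k\<in>KK. (cmod (\<Sum>i<n. u i * cnj (\<phi> k (x i)))) ^ m)"
  proof -
    have B: "pos_hom_poly_form n m (\<lambda>u. \<Sum>\<^sub>\<infinity>k\<in>KK. (cmod (\<Sum>i<n. u i * cnj (\<phi> k (x i)))) ^ m)"
      if x: "\<forall>i<n. x i \<in> space M" for n :: nat and x :: "nat \<Rightarrow> 'x"
    proof -
      have "hom_poly_form n (2*q) (\<lambda>u. \<Sum>\<^sub>\<infinity>k\<in>KK. (cmod (\<Sum>i<n. u i * cnj (\<phi> k (x i)))) ^ m)"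
        by (rule hom_poly_from[where C = "\<lambda>i j. Kker \<phi> KK q (x \<circ> j) (x \<circ> i)"])
           (use P4[of n x] x X_def in blast)
      then show ?thesis
        unfolding pos_hom_poly_form_def m2[symmetric] using F0 by blast
    qed
    show ?thesis using P4 B X_def by blast
  qed
  have part6: "\<forall>x'. (\<forall>s<q. x' s \<in> space M) \<longrightarrow> Kker \<phi> KK q x' x' \<ge> 0"
  proof (intro allI impI)
    fix x' :: "nat \<Rightarrow> 'x" assume "\<forall>s<q. x' s \<in> space M"
    then have s: "P x' x' summable_on KK" using sP X_def by blast
    have "P x' x' k \<ge> 0" for k
    proof -
      have "P x' x' k = complex_of_real ((cmod (\<Prod>s<q. \<phi> k (x' s)))\<^sup>2)"
        unfolding P_def complex_norm_square by simp
      then show ?thesis by (simp add: less_eq_complex_def)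
    qed
    then show "Kker \<phi> KK q x' x' \<ge> 0" unfolding Kdef by (intro infsum_nonneg_complex[OF s])
  qed
  have part7: "\<forall>x' x''. (\<forall>s<q. x' s \<in> space M) \<and> (\<forall>s<q. x'' s \<in> space M) \<longrightarrow>
       cmod (Kker \<phi> KK q x' x'') \<le>
         (\<Prod>s<q. (Re (Kker \<phi> KK q (\<lambda>_. x' s) (\<lambda>_. x' s))) powr (1 / real m)) *
         (\<Prod>s<q. (Re (Kker \<phi> KK q (\<lambda>_. x'' s) (\<lambda>_. x'' s))) powr (1 / real m))"
  proof (intro allI impI)
    fix x' x'' :: "nat \<Rightarrow> 'x"
    assume h: "(\<forall>s<q. x' s \<in> space M) \<and> (\<forall>s<q. x'' s \<in> space M)"
    have diag: "Re (Kker \<phi> KK q (\<lambda>_. y) (\<lambda>_. y)) = (\<Sum>\<^sub>\<infinity>k\<in>KK. cmod (\<phi> k y) ^ m)" if y: "y \<in> X" for y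
    proof -
      have e: "(\<Prod>s<q. \<phi> k y) * (\<Prod>s<q. cnj (\<phi> k y)) = complex_of_real (cmod (\<phi> k y) ^ m)" for k
      proof -
        have "(\<Prod>s<q. \<phi> k y) * (\<Prod>s<q. cnj (\<phi> k y)) = (\<phi> k y * cnj (\<phi> k y)) ^ q"
          by (simp add: power_mult_distrib)
        also have "\<dots> = complex_of_real ((cmod (\<phi> k y))\<^sup>2) ^ q" by (simp only: complex_norm_square)
        also have "\<dots> = complex_of_real (cmod (\<phi> k y) ^ m)" by (simp only: m2 power_mult of_real_power)
        finally show ?thesis .
      qed
      have sy: "(\<lambda>k. cmod (\<phi> k y) ^ m) summable_on KK" using sm y by blast
      have "Kker \<phi> KK q (\<lambda>_. y) (\<lambda>_. y) = (\<Sum>\<^sub>\<infinity>k\<in>KK. complex_of_real (cmod (\<phi> k y) ^ m))"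
        unfolding Kker_def e ..
      also have "\<dots> = complex_of_real (\<Sum>\<^sub>\<infinity>k\<in>KK. cmod (\<phi> k y) ^ m)"
        by (rule infsumI[OF has_sum_of_real[OF has_sum_infsum[OF sy]]])
      finally show ?thesis by simp
    qed
    have x': "\<forall>s<q. x' s \<in> X" and x'': "\<forall>s<q. x'' s \<in> X" using h X_def by auto
    have "cmod (Kker \<phi> KK q x' x'') \<le> (\<Sum>\<^sub>\<infinity>k\<in>KK. cmod (P x' x'' k))"
      unfolding Kdef by (rule norm_infsum_bound) (unfold P_def, rule summP[OF q0 m2 sm x' x''])
    also have "\<dots> = (\<Sum>\<^sub>\<infinity>k\<in>KK. (\<Prod>s<q. cmod (\<phi> k (x' s))) * (\<Prod>s<q. cmod (\<phi> k (x'' s))))"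
      unfolding P_def by (simp only: norm_mult prod_norm[symmetric] complex_mod_cnj)
    also have "\<dots> \<le> (\<Prod>s<q. (\<Sum>\<^sub>\<infinity>k\<in>KK. cmod (\<phi> k (x' s)) ^ m) powr (1 / real m)) *
                    (\<Prod>s<q. (\<Sum>\<^sub>\<infinity>k\<in>KK. cmod (\<phi> k (x'' s)) ^ m) powr (1 / real m))"
    proof (rule holderK[OF q0 m2])
      show "(\<lambda>k. (\<Prod>s<q. cmod (\<phi> k (x' s))) * (\<Prod>s<q. cmod (\<phi> k (x'' s)))) summable_on KK"
        using summP[OF q0 m2 sm x' x''] by (simp only: norm_mult prod_norm[symmetric] complex_mod_cnj)
    qed (use sm x' x'' in auto)
    also have "\<dots> = (\<Prod>s<q. (Re (Kker \<phi> KK q (\<lambda>_. x' s) (\<lambda>_. x' s))) powr (1 / real m)) *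
         (\<Prod>s<q. (Re (Kker \<phi> KK q (\<lambda>_. x'' s) (\<lambda>_. x'' s))) powr (1 / real m))"
      using diag x' x'' by simp
    finally show "cmod (Kker \<phi> KK q x' x'') \<le>
         (\<Prod>s<q. (Re (Kker \<phi> KK q (\<lambda>_. x' s) (\<lambda>_. x' s))) powr (1 / real m)) *
         (\<Prod>s<q. (Re (Kker \<phi> KK q (\<lambda>_. x'' s) (\<lambda>_. x'' s))) powr (1 / real m))" .
  qed
  show ?thesis using part1 part2 part3 part4 part5 part6 part7 by blast
qed


end
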